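(* Let $K\ge2$, $0<q<p$ with $p+(K-1)q=1$, and $\phi\in\Delta$. Suppose $\theta,\theta'\in\Delta$ differ only at two positions $j,k$, where $a:=\theta_j=\theta'_k<b:=\theta_k=\theta'_j$, and suppose $\phi_j<\phi_k$. Then $D_{KL}(\phi,\mathcal{M}(\theta))<D_{KL}(\phi,\mathcal{M}(\theta'))$.
   Context: $\Delta=\{\theta\in\mathbb{R}^K:\theta_i\ge0,\sum_i\theta_i=1\}$. $\mathcal{M}(\theta)_y=q+(p-q)\theta_y$. $D_{KL}(\phi,\psi)=\sum_i\phi_i\log(\phi_i/\psi_i)$ with $0\log(0/\cdot)=0$. *)

theory Defs
  imports "HOL-Analysis.Analysis"
begin

text \<open>Indices are 0..K-1; vectors are functions nat => real restricted to {..<K}.\<close>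

definition prob_simplex :: "nat \<Rightarrow> (nat \<Rightarrow> real) set" where
  "prob_simplex K = {\<theta>. (\<forall>i<K. \<theta> i \<ge> 0) \<and> (\<Sum>i<K. \<theta> i) = 1}"

definition mech :: "real \<Rightarrow> real \<Rightarrow> (nat \<Rightarrow> real) \<Rightarrow> nat \<Rightarrow> real" where
  "mech p q \<theta> y = q + (p - q) * \<theta> y"

definition KL :: "nat \<Rightarrow> (nat \<Rightarrow> real) \<Rightarrow> (nat \<Rightarrow> real) \<Rightarrow> real" where
  "KL K \<phi> \<psi> = (\<Sum>i<K. if \<phi> i = 0 then 0 else \<phi> i * ln (\<phi> i / \<psi> i))"

end

theory Submission
  imports Defs
begin

lemma KL_split:
  assumes "\<And>i. i < K \<Longrightarrow> \<psi> i > 0" "\<And>i. i < K \<Longrightarrow> \<phi> i \<ge> 0"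
  shows "KL K \<phi> \<psi> = (\<Sum>i<K. if \<phi> i = 0 then 0 else \<phi> i * ln (\<phi> i)) - (\<Sum>i<K. \<phi> i * ln (\<psi> i))"
proof -
  have "KL K \<phi> \<psi> = (\<Sum>i<K. (if \<phi> i = 0 then 0 else \<phi> i * ln (\<phi> i)) - \<phi> i * ln (\<psi> i))"
    unfolding KL_def
  proof (rule sum.cong[OF refl])
    fix i assume "i \<in> {..<K}"
    then have "\<psi> i > 0" "\<phi> i \<ge> 0" using assms by auto
    then show "(if \<phi> i = 0 then 0 else \<phi> i * ln (\<phi> i / \<psi> i)) =
      (if \<phi> i = 0 then 0 else \<phi> i * ln (\<phi> i)) - \<phi> i * ln (\<psi> i)"
      by (auto simp: ln_div algebra_simps)
  qed
  then show ?thesis by (simp add: sum_subtractf)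
qed

theorem lemma1:
  fixes K j k :: nat and p q a b :: real and \<phi> \<theta> \<theta>' :: "nat \<Rightarrow> real"
  assumes "K \<ge> 2" and "0 < q" and "q < p" and "p + (real K - 1) * q = 1"
    and "\<phi> \<in> prob_simplex K" and "\<theta> \<in> prob_simplex K" and "\<theta>' \<in> prob_simplex K"
    and "j < K" and "k < K" and "j \<noteq> k"
    and "\<And>i. i < K \<Longrightarrow> i \<noteq> j \<Longrightarrow> i \<noteq> k \<Longrightarrow> \<theta> i = \<theta>' i"
    and "a = \<theta> j" and "a = \<theta>' k" and "b = \<theta> k" and "b = \<theta>' j" and "a < b"
    and "\<phi> j < \<phi> k"
  shows "KL K \<phi> (mech p q \<theta>) < KL K \<phi> (mech p q \<theta>')"
proof -
  have pos: "mech p q t i > 0" if "t \<in> prob_simplex K" "i < K" for t i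
  proof -
    have "t i \<ge> 0" using that by (auto simp: prob_simplex_def)
    then have "(p - q) * t i \<ge> 0" using assms(3) by simp
    then show ?thesis using assms(2) by (simp add: mech_def)
  qed
  have phi0: "\<And>i. i < K \<Longrightarrow> \<phi> i \<ge> 0" using assms(5) by (auto simp: prob_simplex_def)
  define L where "L t = (\<Sum>i<K. \<phi> i * ln (mech p q t i))" for t
  define R where "R t = (\<Sum>i\<in>{..<K} - {j} - {k}. \<phi> i * ln (mech p q t i))" for t
  have split: "L t = \<phi> j * ln (mech p q t j) + \<phi> k * ln (mech p q t k) + R t" for t
  proof -
    have "L t = \<phi> j * ln (mech p q t j) + (\<Sum>i\<in>{..<K} - {j}. \<phi> i * ln (mech p q t i))"
      unfolding L_def using assms(8) by (simp add: sum.remove)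
    also have "(\<Sum>i\<in>{..<K} - {j}. \<phi> i * ln (mech p q t i)) = \<phi> k * ln (mech p q t k) + R t"
      unfolding R_def using assms(9,10) by (subst sum.remove[of _ k]) auto
    finally show ?thesis by simp
  qed
  have "R \<theta> = R \<theta>'" unfolding R_def
    by (rule sum.cong[OF refl]) (simp add: mech_def assms(11))
  define A where "A = q + (p - q) * a"
  define B where "B = q + (p - q) * b"
  have a0: "a \<ge> 0" using assms(6,8,12) by (auto simp: prob_simplex_def)
  have A0: "A > 0" unfolding A_def using a0 assms(2,3) by (smt (verit) mult_nonneg_nonneg)
  have AB: "A < B" unfolding A_def B_def using assms(3,16) by simp
  have lnAB: "ln A < ln B" using A0 AB by simp
  have "L \<theta> - L \<theta>' = (\<phi> k - \<phi> j) * (ln B - ln A)"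
    using split[of \<theta>] split[of \<theta>'] \<open>R \<theta> = R \<theta>'\<close> assms(12-15)
    by (simp add: mech_def A_def B_def algebra_simps)
  also have "\<dots> > 0" using lnAB assms(17) by simp
  finally have "L \<theta>' < L \<theta>" by simp
  then show ?thesis
    using KL_split[of K "mech p q \<theta>" \<phi>] KL_split[of K "mech p q \<theta>'" \<phi>] pos assms(6,7) phi0
    unfolding L_def by simp
qed

end
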